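(* For every $d\geq1$ and $\delta>0$ there is a constant $C(d,\delta)$ such that: for every box $B=\prod_{k=1}^d[a_k,b_k]\subset\mathbb{R}^d$, every integer $n\geq1$, and every measure $\mu$ with density $h$ w.r.t. Lebesgue measure satisfying $\delta\leq h\leq\delta^{-1}$ (on $B$), there exists a partition $(B_1,\dots,B_n)$ of $B$ into $n$ sub-boxes such that $\mu(B_i)=\frac1n\mu(B)$ for all $i$, and $$\frac{l(B)}{C(d,\delta)n^{1/d}}\leq l(B_i)\leq L(B_i)\leq\frac{C(d,\delta)}{n^{1/d}}L(B)\quad\text{for all }i.$$
   Context: For a box $B=\prod_{k=1}^d[a_k,b_k]$, $l(B)=\min_k(b_k-a_k)$ and $L(B)=\max_k(b_k-a_k)$ are its minimal and maximal edge lengths. Sub-boxes forming a partition may share boundary faces (of Lebesgue measure zero). *)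

theory Defs
  imports "HOL-Analysis.Analysis"
begin

definition min_edge :: "real^'d \<Rightarrow> real^'d \<Rightarrow> real" where
  "min_edge a b = Min (range (\<lambda>k. b$k - a$k))"

definition max_edge :: "real^'d \<Rightarrow> real^'d \<Rightarrow> real" where
  "max_edge a b = Max (range (\<lambda>k. b$k - a$k))"

end

theory Submission
  imports Defs
begin



lemma max_edge_ge: "b$k - a$k \<le> max_edge a b"
  unfolding max_edge_def by (rule Max_ge) auto
lemma max_edge_ex: "\<exists>k. max_edge a b = b$k - a$k"
proof -
  have "Max (range (\<lambda>k. b$k - a$k)) \<in> range (\<lambda>k. b$k - a$k)" by (rule Max_in) auto
  then show ?thesis unfolding max_edge_def by (metis (no_types, lifting) rangeE)
qed
lemma min_edge_le: "min_edge a b \<le> b$k - a$k"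
  unfolding min_edge_def by (rule Min_le) auto
lemma min_edge_ex: "\<exists>k. min_edge a b = b$k - a$k"
proof -
  have "Min (range (\<lambda>k. b$k - a$k)) \<in> range (\<lambda>k. b$k - a$k)" by (rule Min_in) auto
  then show ?thesis unfolding min_edge_def by (metis (no_types, lifting) rangeE)
qed
lemma min_le_max_edge: "min_edge a b \<le> max_edge a b"
  using min_edge_le[of a b] max_edge_ge[of b _ a] by (meson order_trans)

lemma final_bounds:
  fixes a b c e :: "real^'d" and \<delta> :: real and n :: nat
  assumes d: "0 < \<delta>" "\<delta> \<le> 1" and n: "n \<ge> 1"
    and ab: "\<forall>k. a$k < b$k" and ce: "\<forall>k. c$k < e$k" and sub: "\<forall>k. a$k \<le> c$k \<and> e$k \<le> b$k"
    and vol1: "\<delta>^2 * (\<Prod>k\<in>UNIV. b$k - a$k) / n \<le> (\<Prod>k\<in>UNIV. e$k - c$k)"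
    and vol2: "(\<Prod>k\<in>UNIV. e$k - c$k) \<le> (\<Prod>k\<in>UNIV. b$k - a$k) / (\<delta>^2 * n)"
    and inv: "\<forall>k. e$k - c$k = b$k - a$k \<or> \<delta>^2/3 * max_edge c e \<le> e$k - c$k"
  shows "min_edge a b / (3/\<delta>^4 * real n powr (1 / real CARD('d))) \<le> min_edge c e"
    "max_edge c e \<le> 3/\<delta>^4 / real n powr (1 / real CARD('d)) * max_edge a b"
proof -
  define q where "q = real n powr (1 / real CARD('d))"
  define D where "D = CARD('d)"
  have D1: "D \<ge> 1" unfolding D_def by (simp add: Suc_le_eq)
  have q1: "q \<ge> 1" unfolding q_def using n by (simp add: ge_one_powr_ge_zero)
  have qD: "q ^ D = real n" unfolding q_def D_def using n
    by (simp add: powr_realpow[symmetric] powr_powr)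
  define LP where "LP = max_edge c e"
  define LB where "LB = max_edge a b"
  define lB where "lB = min_edge a b"
  define vP where "vP = (\<Prod>k\<in>UNIV. e$k - c$k)"
  define vB where "vB = (\<Prod>k\<in>UNIV. b$k - a$k)"
  have LPpos: "LP > 0" using ce max_edge_ge[of e _ c] unfolding LP_def
    by (metis diff_gt_0_iff_gt less_le_trans)
  have lBpos: "lB > 0" using ab min_edge_ex[of a b] unfolding lB_def by (metis diff_gt_0_iff_gt)
  have LPLB: "LP \<le> LB"
  proof -
    obtain k where "LP = e$k - c$k" using max_edge_ex unfolding LP_def by blast
    also have "\<dots> \<le> b$k - a$k" using sub by (smt (verit))
    also have "\<dots> \<le> LB" unfolding LB_def by (rule max_edge_ge)
    finally show ?thesis .
  qed
  have LBpos: "LB > 0" using LPpos LPLB by linarith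
  have vBpos: "vB > 0" unfolding vB_def using ab by (intro prod_pos) auto
  have npos: "real n > 0" using n by simp
  have d2: "\<delta>^2 \<le> 1" "\<delta>^2 > 0" using d by (auto simp: power_le_one)
  define r where "r = \<delta>^2/3 * LP / LB"
  have r0: "r \<ge> 0" "r \<le> 1" unfolding r_def using LPpos LBpos LPLB d2
    by (auto simp: field_simps intro: mult_mono)
  have rS: "r * (b$k - a$k) \<le> e$k - c$k" for k
  proof (cases "e$k - c$k = b$k - a$k")
    case True
    have "r * (b$k - a$k) \<le> 1 * (b$k - a$k)" using r0 ab[rule_format, of k]
      by (intro mult_right_mono) auto
    then show ?thesis using True by simp
  next
    case False
    then have h: "\<delta>^2/3 * LP \<le> e$k - c$k" using inv unfolding LP_def by auto
    have "b$k - a$k \<le> LB" unfolding LB_def by (rule max_edge_ge)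
    then have "r * (b$k - a$k) \<le> r * LB" using r0 by (simp add: mult_left_mono)
    also have "r * LB = \<delta>^2/3 * LP" unfolding r_def using LBpos by simp
    finally show ?thesis using h by linarith
  qed
  have "r ^ D * vB \<le> vP"
  proof -
    have "r ^ D * vB = (\<Prod>k\<in>UNIV. r * (b$k - a$k))" unfolding vB_def D_def
      by (simp add: prod.distrib)
    also have "\<dots> \<le> vP" unfolding vP_def using rS r0 ab
      by (intro prod_mono) (auto intro: mult_nonneg_nonneg simp: less_imp_le)
    finally show ?thesis .
  qed
  then have "r ^ D * vB \<le> vB / (\<delta>^2 * n)" using vol2 unfolding vP_def vB_def by linarith
  also have "vB / (\<delta>^2 * n) = (1 / (\<delta>^2 * n)) * vB" by simp
  finally have "r ^ D \<le> 1 / (\<delta>^2 * n)" using vBpos by (rule mult_right_le_imp_le)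
  then have "r ^ D * real n \<le> 1 / \<delta>^2" using npos d2 by (simp add: field_simps)
  also have "1 / \<delta>^2 \<le> (1/\<delta>^2) ^ D" using D1 d2
    using power_increasing[of 1 D "1/\<delta>^2"] by (simp add: field_simps)
  finally have "(r * q) ^ D \<le> (1/\<delta>^2) ^ D" by (simp add: power_mult_distrib qD)
  then have rq: "r * q \<le> 1/\<delta>^2"
    using r0 q1 D1 power_mono_iff[of "r*q" "1/\<delta>^2" D] by simp
  have LPe: "LP * q = (r * q) * LB * 3 / \<delta>^2" unfolding r_def using LBpos d by (simp add: field_simps)
  also have "\<dots> \<le> (1/\<delta>^2) * LB * 3 / \<delta>^2" using rq LBpos d
    by (intro divide_right_mono mult_right_mono) auto
  also have "\<dots> = 3/\<delta>^4 * LB" by (simp add: field_simps eval_nat_numeral)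
  finally have "LP * q \<le> 3/\<delta>^4 * LB" .
  then have "LP \<le> (3/\<delta>^4 * LB) / q" using q1 by (subst pos_le_divide_eq) auto
  also have "(3/\<delta>^4 * LB) / q = 3/\<delta>^4 / q * LB" by simp
  finally show "max_edge c e \<le> 3/\<delta>^4 / real n powr (1 / real CARD('d)) * max_edge a b"
    unfolding q_def LP_def LB_def by simp
  have vPL: "vP \<le> LP ^ D" unfolding vP_def D_def LP_def
    using ce max_edge_ge[of e _ c] prod_mono[of UNIV "\<lambda>k. e$k - c$k" "\<lambda>_. max_edge c e"]
    by (simp add: less_imp_le)
  have vBl: "lB ^ D \<le> vB" unfolding vB_def D_def lB_def
    using ab min_edge_le[of a b] prod_mono[of UNIV "\<lambda>_. min_edge a b" "\<lambda>k. b$k - a$k"] lBpos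
    by (simp add: less_imp_le lB_def)
  have "(\<delta>^2 * lB) ^ D = \<delta>^(2*D) * lB ^ D" by (simp add: power_mult_distrib power_mult)
  also have "\<dots> \<le> \<delta>^2 * lB ^ D" using D1 d lBpos
    by (intro mult_right_mono power_decreasing) auto
  also have "\<dots> \<le> \<delta>^2 * vB" using vBl d2 by (intro mult_left_mono) auto
  also have "\<dots> \<le> vP * n" using vol1 npos unfolding vP_def vB_def by (simp add: field_simps)
  also have "\<dots> \<le> LP ^ D * n" using vPL npos by (intro mult_right_mono) auto
  also have "\<dots> = (LP * q) ^ D" by (simp add: power_mult_distrib qD)
  finally have "(\<delta>^2 * lB) ^ D \<le> (LP * q) ^ D" .
  then have Lq: "\<delta>^2 * lB \<le> LP * q"
    using D1 LPpos q1 power_mono_iff[of "\<delta>^2 * lB" "LP * q" D] lBpos d2 by simp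
  have T: "lB / (3/\<delta>^4 * q) = \<delta>^4 * lB / (3 * q)" using d by (simp add: field_simps)
  obtain k0 where k0: "min_edge c e = e$k0 - c$k0" using min_edge_ex by blast
  have "\<delta>^4 * lB / (3 * q) \<le> e$k0 - c$k0"
  proof (cases "e$k0 - c$k0 = b$k0 - a$k0")
    case True
    have "\<delta>^4 * lB / (3 * q) \<le> lB"
    proof -
      have "\<delta>^4 \<le> 1" using d by (simp add: power_le_one)
      then have "\<delta>^4 * lB \<le> 1 * lB" using lBpos by (intro mult_right_mono) auto
      also have "\<dots> \<le> lB * (3 * q)" using q1 lBpos by simp
      finally show ?thesis using q1 by (subst pos_divide_le_eq) auto
    qed
    also have "lB \<le> b$k0 - a$k0" unfolding lB_def by (rule min_edge_le)
    finally show ?thesis using True by simp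
  next
    case False
    then have h: "\<delta>^2/3 * LP \<le> e$k0 - c$k0" using inv unfolding LP_def by auto
    have "\<delta>^4 * lB / (3 * q) = (\<delta>^2/3) * (\<delta>^2 * lB) / q" by (simp add: field_simps eval_nat_numeral)
    also have "\<dots> \<le> (\<delta>^2/3) * (LP * q) / q" using Lq d2 q1
      by (intro divide_right_mono mult_left_mono) auto
    also have "\<dots> = \<delta>^2/3 * LP" using q1 by simp
    finally show ?thesis using h by linarith
  qed
  then show "min_edge a b / (3/\<delta>^4 * real n powr (1 / real CARD('d))) \<le> min_edge c e"
    using T k0 unfolding q_def lB_def by (simp only: mult.commute)
qed



lemma dens_bounds:
  fixes h :: "real^'d \<Rightarrow> real" and A :: "(real^'d) set"
  assumes d: "0 < \<delta>" and hm: "h \<in> borel_measurable lebesgue"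
    and hb: "\<forall>x\<in>cbox a b. \<delta> \<le> h x \<and> h x \<le> 1/\<delta>"
    and A: "A \<in> sets lebesgue" "A \<subseteq> cbox a b"
  shows "A \<in> fmeasurable (density lebesgue (\<lambda>x. ennreal (h x)))"
    "\<delta> * measure lebesgue A \<le> measure (density lebesgue (\<lambda>x. ennreal (h x))) A"
    "measure (density lebesgue (\<lambda>x. ennreal (h x))) A \<le> measure lebesgue A / \<delta>"
proof -
  let ?M = "density lebesgue (\<lambda>x. ennreal (h x))"
  have hm': "(\<lambda>x. ennreal (h x)) \<in> borel_measurable lebesgue" using hm by measurable
  have e: "emeasure ?M A = (\<integral>\<^sup>+ x. ennreal (h x) * indicator A x \<partial>lebesgue)"
    using emeasure_density[OF hm' A(1)] .
  have lfin: "emeasure lebesgue A < \<infinity>"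
  proof -
    have "emeasure lebesgue A \<le> emeasure lebesgue (cbox a b)"
      using A by (intro emeasure_mono) auto
    also have "\<dots> < \<infinity>" using emeasure_lborel_cbox_finite[of a b] by simp
    finally show ?thesis .
  qed
  have up: "emeasure ?M A \<le> ennreal (1/\<delta>) * emeasure lebesgue A"
  proof -
    have "(\<integral>\<^sup>+ x. ennreal (h x) * indicator A x \<partial>lebesgue) \<le> (\<integral>\<^sup>+ x. ennreal (1/\<delta>) * indicator A x \<partial>lebesgue)"
      using hb A(2) by (intro nn_integral_mono) (auto simp: indicator_def subset_iff intro!: ennreal_leI)
    then show ?thesis using e A(1) by (simp add: nn_integral_cmult_indicator)
  qed
  have lo: "ennreal \<delta> * emeasure lebesgue A \<le> emeasure ?M A"
  proof -
    have "(\<integral>\<^sup>+ x. ennreal \<delta> * indicator A x \<partial>lebesgue) \<le> (\<integral>\<^sup>+ x. ennreal (h x) * indicator A x \<partial>lebesgue)"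
      using hb A(2) by (intro nn_integral_mono) (auto simp: indicator_def subset_iff intro!: ennreal_leI)
    then show ?thesis using e A(1) by (simp add: nn_integral_cmult_indicator)
  qed
  have "ennreal (1/\<delta>) * emeasure lebesgue A < \<infinity>" using lfin
    by (simp add: ennreal_mult_less_top)
  hence fin: "emeasure ?M A < \<infinity>" using up by (rule le_less_trans[rotated])
  show "A \<in> fmeasurable ?M" using fin A(1) by (auto simp: fmeasurable_def)
  have mA: "emeasure lebesgue A = ennreal (measure lebesgue A)" using lfin
    by (simp add: emeasure_eq_ennreal_measure less_top)
  have mM: "emeasure ?M A = ennreal (measure ?M A)" using fin
    by (simp add: emeasure_eq_ennreal_measure less_top)
  show "\<delta> * measure lebesgue A \<le> measure ?M A"
    using lo d unfolding mA mM by (simp add: ennreal_mult'[symmetric])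
  show "measure ?M A \<le> measure lebesgue A / \<delta>"
    using up d unfolding mA mM by (simp add: ennreal_mult'[symmetric] divide_inverse mult.commute)
qed

definition upd :: "real^'d \<Rightarrow> 'd \<Rightarrow> real \<Rightarrow> real^'d" where
  "upd v j t = (\<chi> k. if k = j then t else v$k)"

lemma upd_nth [simp]: "upd v j t $ k = (if k = j then t else v$k)"
  unfolding upd_def by simp

lemma prod_upd: fixes f :: "'d::finite \<Rightarrow> real" shows "(\<Prod>k\<in>UNIV. (if k = j then x else f k)) = (x::real) * (\<Prod>k\<in>UNIV. if k = j then 1 else f k)"
proof -
  have "(\<Prod>k\<in>UNIV. (if k = j then x else f k)) = (\<Prod>k\<in>UNIV. (if k = j then x else 1) * (if k = j then 1 else f k))"
    by (intro prod.cong) auto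
  also have "\<dots> = (\<Prod>k\<in>UNIV. (if k = j then x else 1)) * (\<Prod>k\<in>UNIV. if k = j then 1 else f k)"
    by (rule prod.distrib)
  also have "(\<Prod>k\<in>UNIV. (if k = j then x else 1)) = x" using prod.delta[of UNIV j "\<lambda>_. x"] by simp
  finally show ?thesis .
qed

lemma vol_cbox:
  fixes c e :: "real^'d"
  assumes "\<forall>k. c$k \<le> e$k"
  shows "measure lebesgue (cbox c e) = (\<Prod>k\<in>UNIV. e$k - c$k)"
proof -
  have "cbox c e \<noteq> {}" using assms by (auto simp: interval_eq_empty_cart not_less)
  then show ?thesis by (simp add: content_cbox_cart)
qed

lemma cbox_sets [simp]: "cbox (c::real^'d) e \<in> sets lebesgue"
  using lmeasurable_cbox fmeasurableD by blast

lemma split_measure: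
  fixes h :: "real^'d \<Rightarrow> real" and a b :: "real^'d"
  assumes d: "0 < \<delta>" and hm: "h \<in> borel_measurable lebesgue"
    and hb: "\<forall>x\<in>cbox a b. \<delta> \<le> h x \<and> h x \<le> 1/\<delta>"
    and ab: "\<forall>k. a$k \<le> b$k" and s: "a$j \<le> s" "s \<le> b$j"
  shows "measure (density lebesgue (\<lambda>x. ennreal (h x))) (cbox a b) =
     measure (density lebesgue (\<lambda>x. ennreal (h x))) (cbox a (upd b j s)) +
     measure (density lebesgue (\<lambda>x. ennreal (h x))) (cbox (upd a j s) b)"
proof -
  let ?M = "density lebesgue (\<lambda>x. ennreal (h x))"
  have sub1: "cbox a (upd b j s) \<subseteq> cbox a b"
  proof
    fix x assume "x \<in> cbox a (upd b j s)"
    then have H: "\<And>i. a$i \<le> x$i \<and> x$i \<le> (if i = j then s else b$i)" by (simp add: mem_box_cart)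
    have "a$i \<le> x$i \<and> x$i \<le> b$i" for i using H[of i] s by (auto split: if_splits)
    then show "x \<in> cbox a b" by (simp add: mem_box_cart)
  qed
  have sub2: "cbox (upd a j s) b \<subseteq> cbox a b"
  proof
    fix x assume "x \<in> cbox (upd a j s) b"
    then have H: "\<And>i. (if i = j then s else a$i) \<le> x$i \<and> x$i \<le> b$i" by (simp add: mem_box_cart)
    have "a$i \<le> x$i \<and> x$i \<le> b$i" for i using H[of i] s by (auto split: if_splits)
    then show "x \<in> cbox a b" by (simp add: mem_box_cart)
  qed
  have U: "cbox a b = cbox a (upd b j s) \<union> cbox (upd a j s) b"
  proof (rule antisym)
    show "cbox a (upd b j s) \<union> cbox (upd a j s) b \<subseteq> cbox a b" using sub1 sub2 by blast
    show "cbox a b \<subseteq> cbox a (upd b j s) \<union> cbox (upd a j s) b"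
    proof
      fix x assume "x \<in> cbox a b"
      then have H: "\<And>i. a$i \<le> x$i \<and> x$i \<le> b$i" by (simp add: mem_box_cart)
      show "x \<in> cbox a (upd b j s) \<union> cbox (upd a j s) b"
      proof (cases "x$j \<le> s")
        case True then show ?thesis using H by (auto simp: mem_box_cart)
      next
        case False then show ?thesis using H by (auto simp: mem_box_cart)
      qed
    qed
  qed
  have I: "cbox a (upd b j s) \<inter> cbox (upd a j s) b = cbox (upd a j s) (upd b j s)"
  proof (rule antisym)
    show "cbox a (upd b j s) \<inter> cbox (upd a j s) b \<subseteq> cbox (upd a j s) (upd b j s)"
    proof
      fix x assume "x \<in> cbox a (upd b j s) \<inter> cbox (upd a j s) b"
      then have H: "\<And>i. a$i \<le> x$i \<and> x$i \<le> (if i = j then s else b$i)"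
        "\<And>i. (if i = j then s else a$i) \<le> x$i \<and> x$i \<le> b$i" by (simp_all add: mem_box_cart)
      have "(if i = j then s else a$i) \<le> x$i \<and> x$i \<le> (if i = j then s else b$i)" for i
        using H(1)[of i] H(2)[of i] by auto
      then show "x \<in> cbox (upd a j s) (upd b j s)" by (simp add: mem_box_cart)
    qed
    show "cbox (upd a j s) (upd b j s) \<subseteq> cbox a (upd b j s) \<inter> cbox (upd a j s) b"
    proof
      fix x assume "x \<in> cbox (upd a j s) (upd b j s)"
      then have H: "\<And>i. (if i = j then s else a$i) \<le> x$i \<and> x$i \<le> (if i = j then s else b$i)"
        by (simp add: mem_box_cart)
      have "a$i \<le> x$i \<and> x$i \<le> (if i = j then s else b$i)" "(if i = j then s else a$i) \<le> x$i \<and> x$i \<le> b$i" for i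
        using H[of i] s by (auto split: if_splits)
      then show "x \<in> cbox a (upd b j s) \<inter> cbox (upd a j s) b" by (simp add: mem_box_cart)
    qed
  qed
  have sub3: "cbox (upd a j s) (upd b j s) \<subseteq> cbox a b" using U I by blast+
  have "measure lebesgue (cbox (upd a j s) (upd b j s)) = 0"
    using ab s by (subst vol_cbox) (auto simp: prod_upd)
  then have z: "measure ?M (cbox (upd a j s) (upd b j s)) = 0"
    using dens_bounds(3)[OF d hm hb cbox_sets sub3] dens_bounds(1)[OF d hm hb cbox_sets sub3]
    by (simp add: measure_nonneg antisym)
  show ?thesis
    using measure_Un3[OF dens_bounds(1)[OF d hm hb cbox_sets sub1] dens_bounds(1)[OF d hm hb cbox_sets sub2]]
    unfolding U[symmetric] I z by simp
qed


lemma prod_edges_upd: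
  fixes a b c e :: "real^'d"
  assumes "\<forall>k. k \<noteq> j \<longrightarrow> e$k - c$k = b$k - a$k"
  shows "(\<Prod>k\<in>UNIV. e$k - c$k) = (e$j - c$j) * (\<Prod>k\<in>UNIV. if k = j then 1 else b$k - a$k)"
proof -
  have "(\<Prod>k\<in>UNIV. e$k - c$k) = (\<Prod>k\<in>UNIV. if k = j then e$j - c$j else b$k - a$k)"
    using assms by (intro prod.cong) auto
  also have "\<dots> = (e$j - c$j) * (\<Prod>k\<in>UNIV. if k = j then 1 else b$k - a$k)" by (rule prod_upd)
  finally show ?thesis .
qed

lemma cbox_sub:
  fixes a b c e :: "real^'d"
  assumes "\<forall>k. a$k \<le> c$k \<and> e$k \<le> b$k"
  shows "cbox c e \<subseteq> cbox a b"
proof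
  fix x assume "x \<in> cbox c e"
  then have H: "\<And>i. c$i \<le> x$i \<and> x$i \<le> e$i" by (simp add: mem_box_cart)
  have "a$i \<le> x$i \<and> x$i \<le> b$i" for i using H[of i] assms[rule_format, of i] by linarith
  then show "x \<in> cbox a b" by (simp add: mem_box_cart)
qed

lemma upd_upd [simp]: "upd (upd v j t) j s = upd v j s"
  by (simp add: vec_eq_iff)
lemma upd_same [simp]: "upd v j (v$j) = v"
  by (simp add: vec_eq_iff)

lemma vol_edges:
  fixes a b c e :: "real^'d"
  assumes "\<forall>k. c$k \<le> e$k" "\<forall>k. k \<noteq> j \<longrightarrow> e$k - c$k = b$k - a$k"
  shows "measure lebesgue (cbox c e) = (e$j - c$j) * (\<Prod>k\<in>UNIV. if k = j then 1 else b$k - a$k)"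
  using vol_cbox[OF assms(1)] prod_edges_upd[OF assms(2)] by simp

lemma cut_exists:
  fixes h :: "real^'d \<Rightarrow> real" and a b :: "real^'d"
  assumes d: "0 < \<delta>" and hm: "h \<in> borel_measurable lebesgue"
    and hb: "\<forall>x\<in>cbox a b. \<delta> \<le> h x \<and> h x \<le> 1/\<delta>"
    and ab: "\<forall>k. a$k < b$k" and p: "0 \<le> p" "p \<le> 1"
  shows "\<exists>t. a$j \<le> t \<and> t \<le> b$j \<and>
     measure (density lebesgue (\<lambda>x. ennreal (h x))) (cbox a (upd b j t)) = p * measure (density lebesgue (\<lambda>x. ennreal (h x))) (cbox a b) \<and>
     measure (density lebesgue (\<lambda>x. ennreal (h x))) (cbox (upd a j t) b) = (1 - p) * measure (density lebesgue (\<lambda>x. ennreal (h x))) (cbox a b) \<and>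
     \<delta>^2 * p * (b$j - a$j) \<le> t - a$j \<and> \<delta>^2 * (1 - p) * (b$j - a$j) \<le> b$j - t"
proof -
  let ?M = "density lebesgue (\<lambda>x. ennreal (h x))"
  define K where "K = (\<Prod>k\<in>UNIV. if k = j then 1 else b$k - a$k)"
  have Kpos: "K > 0" unfolding K_def using ab by (intro prod_pos) (auto simp: less_imp_le)
  define F where "F t = measure ?M (cbox a (upd b j t))" for t
  have ab': "\<forall>k. a$k \<le> b$k" using ab by (simp add: less_imp_le)
  have subA: "cbox a (upd b j t) \<subseteq> cbox a b" if "t \<le> b$j" for t
    using that ab' by (intro cbox_sub) auto
  have subB: "cbox (upd a j t) b \<subseteq> cbox a b" if "a$j \<le> t" for t
    using that ab' by (intro cbox_sub) auto
  have volA: "measure lebesgue (cbox a (upd b j t)) = (t - a$j) * K" if "a$j \<le> t" for t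
    using that ab' vol_edges[of a "upd b j t" j b a] unfolding K_def by auto
  have volB: "measure lebesgue (cbox (upd a j t) b) = (b$j - t) * K" if "t \<le> b$j" for t
    using that ab' vol_edges[of "upd a j t" b j b a] unfolding K_def by auto
  have volAB: "measure lebesgue (cbox a b) = (b$j - a$j) * K"
    using volA[of "b$j"] ab' by simp
  have lip: "(K/\<delta>)-lipschitz_on {a$j..b$j} F"
  proof (rule lipschitz_on_leI)
    show "0 \<le> K/\<delta>" using Kpos d by simp
    fix s t assume st: "s \<in> {a$j..b$j}" "t \<in> {a$j..b$j}" "s \<le> t"
    have hbt: "\<forall>x\<in>cbox a (upd b j t). \<delta> \<le> h x \<and> h x \<le> 1/\<delta>" using hb subA[of t] st by auto
    have abt: "\<forall>k. a$k \<le> upd b j t $ k" using ab' st by auto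
    have eq: "F t = F s + measure ?M (cbox (upd a j s) (upd b j t))"
      using split_measure[OF d hm hbt abt, of j s] st unfolding F_def by simp
    have slsub: "cbox (upd a j s) (upd b j t) \<subseteq> cbox a b"
      using st ab' by (intro cbox_sub) auto
    have hbs: "\<forall>x\<in>cbox a b. \<delta> \<le> h x \<and> h x \<le> 1/\<delta>" by (rule hb)
    have "measure lebesgue (cbox (upd a j s) (upd b j t)) = (t - s) * K"
      using st ab' vol_edges[of "upd a j s" "upd b j t" j b a] unfolding K_def by auto
    then have up: "measure ?M (cbox (upd a j s) (upd b j t)) \<le> (t - s) * K / \<delta>"
      using dens_bounds(3)[OF d hm hb cbox_sets slsub] by simp
    have lo: "0 \<le> measure ?M (cbox (upd a j s) (upd b j t))" by (rule measure_nonneg)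
    show "dist (F s) (F t) \<le> K / \<delta> * dist s t"
    proof -
      have "dist (F s) (F t) = measure ?M (cbox (upd a j s) (upd b j t))"
        using eq lo by (simp add: dist_real_def)
      also have "\<dots> \<le> (t - s) * K / \<delta>" by (rule up)
      also have "\<dots> = K / \<delta> * dist s t" using st by (simp add: dist_real_def)
      finally show ?thesis .
    qed
  qed
  have cont: "continuous_on {a$j..b$j} F" by (rule lipschitz_on_continuous_on[OF lip])
  have F0: "F (a$j) = 0"
  proof -
    have "F (a$j) \<le> 0" using dens_bounds(3)[OF d hm hb cbox_sets subA[of "a$j"]] volA[of "a$j"] ab
      unfolding F_def by (simp add: less_imp_le)
    then show ?thesis unfolding F_def using measure_nonneg by (metis antisym)
  qed
  have F1: "F (b$j) = measure ?M (cbox a b)" unfolding F_def by simp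
  have mB: "measure ?M (cbox a b) \<ge> 0" by (rule measure_nonneg)
  obtain t where t: "a$j \<le> t" "t \<le> b$j" "F t = p * measure ?M (cbox a b)"
  proof -
    have y1: "F (a$j) \<le> p * measure ?M (cbox a b)" using F0 p mB by simp
    have y2: "p * measure ?M (cbox a b) \<le> F (b$j)" using F1 p mB mult_right_mono[of p 1] by simp
    have y3: "a$j \<le> b$j" using ab' by simp
    show ?thesis using IVT'[OF y1 y2 y3 cont] that by blast
  qed
  have sp: "measure ?M (cbox a b) = F t + measure ?M (cbox (upd a j t) b)"
    using split_measure[OF d hm hb ab' t(1,2)] unfolding F_def by simp
  have m2: "measure ?M (cbox (upd a j t) b) = (1 - p) * measure ?M (cbox a b)"
    using sp t(3) by (simp add: algebra_simps)
  have lowB: "\<delta> * ((b$j - a$j) * K) \<le> measure ?M (cbox a b)"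
    using dens_bounds(2)[OF d hm hb cbox_sets order_refl] volAB by simp
  have upA: "F t \<le> (t - a$j) * K / \<delta>"
    using dens_bounds(3)[OF d hm hb cbox_sets subA[OF t(2)]] volA[OF t(1)] unfolding F_def by simp
  have upB: "measure ?M (cbox (upd a j t) b) \<le> (b$j - t) * K / \<delta>"
    using dens_bounds(3)[OF d hm hb cbox_sets subB[OF t(1)]] volB[OF t(2)] by simp
  have i1: "\<delta>^2 * p * (b$j - a$j) \<le> t - a$j"
  proof -
    have "p * (\<delta> * ((b$j - a$j) * K)) \<le> (t - a$j) * K / \<delta>"
      using mult_left_mono[OF lowB p(1)] upA t(3) by linarith
    then have "\<delta> * (p * (\<delta> * ((b$j - a$j) * K))) \<le> (t - a$j) * K"
      using d by (simp add: field_simps)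
    then have "(\<delta>^2 * p * (b$j - a$j)) * K \<le> (t - a$j) * K"
      by (simp add: power2_eq_square algebra_simps)
    then show ?thesis using Kpos by simp
  qed
  have i2: "\<delta>^2 * (1 - p) * (b$j - a$j) \<le> b$j - t"
  proof -
    have "(1 - p) * (\<delta> * ((b$j - a$j) * K)) \<le> (b$j - t) * K / \<delta>"
      using mult_left_mono[OF lowB, of "1 - p"] upB m2 p by linarith
    then have "\<delta> * ((1 - p) * (\<delta> * ((b$j - a$j) * K))) \<le> (b$j - t) * K"
      using d by (simp add: field_simps)
    then have "(\<delta>^2 * (1 - p) * (b$j - a$j)) * K \<le> (b$j - t) * K"
      by (simp add: power2_eq_square algebra_simps)
    then show ?thesis using Kpos by simp
  qed
  show ?thesis using t m2 i1 i2 unfolding F_def by blast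
qed


lemma max_edge_mono:
  fixes a b c e :: "real^'d"
  assumes "\<forall>k. a$k \<le> c$k \<and> e$k \<le> b$k"
  shows "max_edge c e \<le> max_edge a b"
proof -
  obtain k where k: "max_edge c e = e$k - c$k" using max_edge_ex by blast
  have "e$k - c$k \<le> b$k - a$k" using assms[rule_format, of k] by linarith
  also have "\<dots> \<le> max_edge a b" by (rule max_edge_ge)
  finally show ?thesis using k by simp
qed

lemma cbox_split:
  fixes a b :: "real^'d"
  assumes s: "a$j \<le> s" "s \<le> b$j"
  shows "cbox a b = cbox a (upd b j s) \<union> cbox (upd a j s) b"
proof (rule antisym)
  show "cbox a (upd b j s) \<union> cbox (upd a j s) b \<subseteq> cbox a b"
  proof
    fix x assume "x \<in> cbox a (upd b j s) \<union> cbox (upd a j s) b"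
    then have "(\<forall>i. a$i \<le> x$i \<and> x$i \<le> (if i = j then s else b$i)) \<or> (\<forall>i. (if i = j then s else a$i) \<le> x$i \<and> x$i \<le> b$i)"
      by (simp add: mem_box_cart)
    then have "a$i \<le> x$i \<and> x$i \<le> b$i" for i
    proof
      assume H: "\<forall>i. a$i \<le> x$i \<and> x$i \<le> (if i = j then s else b$i)"
      show ?thesis using H[rule_format, of i] s by (auto split: if_splits)
    next
      assume H: "\<forall>i. (if i = j then s else a$i) \<le> x$i \<and> x$i \<le> b$i"
      show ?thesis using H[rule_format, of i] s by (auto split: if_splits)
    qed
    then show "x \<in> cbox a b" by (simp add: mem_box_cart)
  qed
  show "cbox a b \<subseteq> cbox a (upd b j s) \<union> cbox (upd a j s) b"
  proof
    fix x assume "x \<in> cbox a b"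
    then have H: "\<And>i. a$i \<le> x$i \<and> x$i \<le> b$i" by (simp add: mem_box_cart)
    show "x \<in> cbox a (upd b j s) \<union> cbox (upd a j s) b"
    proof (cases "x$j \<le> s")
      case True then show ?thesis using H by (auto simp: mem_box_cart)
    next
      case False then show ?thesis using H by (auto simp: mem_box_cart)
    qed
  qed
qed

lemma interior_sub_box:
  fixes a b c e :: "real^'d"
  assumes "\<forall>k. a$k \<le> c$k \<and> e$k \<le> b$k"
  shows "interior (cbox c e) \<subseteq> box a b"
  using interior_mono[OF cbox_sub[OF assms]] by simp

lemma partition_rec:
  fixes h :: "real^'d \<Rightarrow> real" and \<delta> :: real
  assumes d: "0 < \<delta>" and hm: "h \<in> borel_measurable lebesgue"
  shows "n \<ge> 1 \<Longrightarrow> (\<forall>k. a$k < b$k) \<Longrightarrow> (\<forall>x\<in>cbox a b. \<delta> \<le> h x \<and> h x \<le> 1/\<delta>) \<Longrightarrow>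
    \<exists>c e :: nat \<Rightarrow> real^'d. (\<forall>i<n. \<forall>k. c i$k < e i$k) \<and> (\<forall>i<n. \<forall>k. a$k \<le> c i$k \<and> e i$k \<le> b$k) \<and>
      (\<Union>i<n. cbox (c i) (e i)) = cbox a b \<and>
      (\<forall>i<n. \<forall>j<n. i \<noteq> j \<longrightarrow> interior (cbox (c i) (e i)) \<inter> interior (cbox (c j) (e j)) = {}) \<and>
      (\<forall>i<n. measure (density lebesgue (\<lambda>x. ennreal (h x))) (cbox (c i) (e i))
          = measure (density lebesgue (\<lambda>x. ennreal (h x))) (cbox a b) / real n) \<and>
      (\<forall>i<n. \<forall>k. e i$k - c i$k = b$k - a$k \<or> \<delta>^2/3 * max_edge (c i) (e i) \<le> e i$k - c i$k)"
proof (induction n arbitrary: a b rule: less_induct)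
  case (less n)
  let ?M = "density lebesgue (\<lambda>x. ennreal (h x))"
  show ?case
  proof (cases "n = 1")
    case True
    show ?thesis
      by (rule exI[of _ "\<lambda>_. a"], rule exI[of _ "\<lambda>_. b"]) (use True less.prems in auto)
  next
    case False
    with less.prems have n2: "n \<ge> 2" by linarith
    obtain j where j: "max_edge a b = b$j - a$j" using max_edge_ex by blast
    define n1 where "n1 = n div 2"
    define m2 where "m2 = n - n1"
    have n1: "1 \<le> n1" "n1 < n" "3 * n1 \<ge> n" unfolding n1_def using n2 by auto
    have m2: "1 \<le> m2" "m2 < n" "2 * m2 \<ge> n" unfolding m2_def n1_def using n2 by auto
    define p where "p = real n1 / real n"
    have p: "0 \<le> p" "p \<le> 1" "p \<ge> 1/3" "1 - p = real m2 / real n" "1 - p \<ge> 1/3"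
    proof -
      have nr: "real n > 0" using n2 by simp
      have r1: "3 * real n1 \<ge> real n" using n1(3) by (metis of_nat_le_iff of_nat_mult of_nat_numeral)
      have r2: "2 * real m2 \<ge> real n" using m2(3) by (metis of_nat_le_iff of_nat_mult of_nat_numeral)
      have r3: "real m2 = real n - real n1" unfolding m2_def using n1(2) by (simp add: of_nat_diff)
      have r4: "real n1 \<le> real n" using n1(2) by simp
      show "0 \<le> p" unfolding p_def by simp
      show "p \<le> 1" unfolding p_def using r4 nr by simp
      show "p \<ge> 1/3" unfolding p_def using r1 nr by (simp add: field_simps)
      show "1 - p = real m2 / real n" unfolding p_def using r3 nr by (simp add: field_simps)
      moreover have "real m2 / real n \<ge> 1/3" using r2 nr by (simp add: field_simps)
      ultimately show "1 - p \<ge> 1/3" by simp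
    qed
    have ab: "\<forall>k. a$k < b$k" using less.prems by simp
    have hb: "\<forall>x\<in>cbox a b. \<delta> \<le> h x \<and> h x \<le> 1/\<delta>" using less.prems by simp
    obtain t where t: "a$j \<le> t" "t \<le> b$j"
      "measure ?M (cbox a (upd b j t)) = p * measure ?M (cbox a b)"
      "measure ?M (cbox (upd a j t) b) = (1 - p) * measure ?M (cbox a b)"
      "\<delta>^2 * p * (b$j - a$j) \<le> t - a$j" "\<delta>^2 * (1 - p) * (b$j - a$j) \<le> b$j - t"
      using cut_exists[OF d hm hb ab p(1,2), where j=j] by (elim exE conjE) (rule that)
    have bja: "b$j - a$j > 0" using ab by simp
    have d2: "\<delta>^2 > 0" using d by simp
    have al1: "\<delta>^2/3 * max_edge a b \<le> t - a$j"
    proof -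
      have "(1/3) * (b$j - a$j) \<le> p * (b$j - a$j)" using p(3) bja by (intro mult_right_mono) auto
      then have "\<delta>^2 * ((1/3) * (b$j - a$j)) \<le> \<delta>^2 * (p * (b$j - a$j))" using d2 by (intro mult_left_mono) auto
      then have "\<delta>^2/3 * max_edge a b \<le> \<delta>^2 * (p * (b$j - a$j))" using j by simp
      then have "\<delta>^2/3 * max_edge a b \<le> \<delta>^2 * p * (b$j - a$j)" by (simp only: mult.assoc)
      then show ?thesis using t(5) by linarith
    qed
    have al2: "\<delta>^2/3 * max_edge a b \<le> b$j - t"
    proof -
      have "(1/3) * (b$j - a$j) \<le> (1 - p) * (b$j - a$j)" using p(5) bja by (intro mult_right_mono) auto
      then have "\<delta>^2 * ((1/3) * (b$j - a$j)) \<le> \<delta>^2 * ((1 - p) * (b$j - a$j))" using d2 by (intro mult_left_mono) auto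
      then have "\<delta>^2/3 * max_edge a b \<le> \<delta>^2 * ((1 - p) * (b$j - a$j))" using j by simp
      then have "\<delta>^2/3 * max_edge a b \<le> \<delta>^2 * (1 - p) * (b$j - a$j)" by (simp only: mult.assoc)
      then show ?thesis using t(6) by linarith
    qed
    have mpos: "max_edge a b > 0" using j bja by simp
    have tlo: "a$j < t" using al1 mpos d2 by (smt (verit) mult_pos_pos divide_pos_pos)
    have thi: "t < b$j" using al2 mpos d2 by (smt (verit) mult_pos_pos divide_pos_pos)
    have ab1: "\<forall>k. a$k < upd b j t $ k" using ab tlo by simp
    have ab2: "\<forall>k. upd a j t $ k < b$k" using ab thi by simp
    have sub1: "\<forall>k. a$k \<le> a$k \<and> upd b j t $ k \<le> b$k" using t by simp
    have sub2: "\<forall>k. a$k \<le> upd a j t $ k \<and> b$k \<le> b$k" using t by simp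
    have hb1: "\<forall>x\<in>cbox a (upd b j t). \<delta> \<le> h x \<and> h x \<le> 1/\<delta>" using hb cbox_sub[OF sub1] by blast
    have hb2: "\<forall>x\<in>cbox (upd a j t) b. \<delta> \<le> h x \<and> h x \<le> 1/\<delta>" using hb cbox_sub[OF sub2] by blast
    obtain c1 e1 where I1:
      "\<forall>i<n1. \<forall>k. c1 i$k < e1 i$k" "\<forall>i<n1. \<forall>k. a$k \<le> c1 i$k \<and> e1 i$k \<le> upd b j t$k"
      "(\<Union>i<n1. cbox (c1 i) (e1 i)) = cbox a (upd b j t)"
      "\<forall>i<n1. \<forall>i'<n1. i \<noteq> i' \<longrightarrow> interior (cbox (c1 i) (e1 i)) \<inter> interior (cbox (c1 i') (e1 i')) = {}"
      "\<forall>i<n1. measure ?M (cbox (c1 i) (e1 i)) = measure ?M (cbox a (upd b j t)) / real n1"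
      "\<forall>i<n1. \<forall>k. e1 i$k - c1 i$k = upd b j t$k - a$k \<or> \<delta>^2/3 * max_edge (c1 i) (e1 i) \<le> e1 i$k - c1 i$k"
      using less.IH[OF n1(2) n1(1) ab1 hb1] by (elim exE conjE) (rule that)
    obtain c2 e2 where I2:
      "\<forall>i<m2. \<forall>k. c2 i$k < e2 i$k" "\<forall>i<m2. \<forall>k. upd a j t$k \<le> c2 i$k \<and> e2 i$k \<le> b$k"
      "(\<Union>i<m2. cbox (c2 i) (e2 i)) = cbox (upd a j t) b"
      "\<forall>i<m2. \<forall>i'<m2. i \<noteq> i' \<longrightarrow> interior (cbox (c2 i) (e2 i)) \<inter> interior (cbox (c2 i') (e2 i')) = {}"
      "\<forall>i<m2. measure ?M (cbox (c2 i) (e2 i)) = measure ?M (cbox (upd a j t) b) / real m2"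
      "\<forall>i<m2. \<forall>k. e2 i$k - c2 i$k = b$k - upd a j t$k \<or> \<delta>^2/3 * max_edge (c2 i) (e2 i) \<le> e2 i$k - c2 i$k"
      using less.IH[OF m2(2) m2(1) ab2 hb2] by (elim exE conjE) (rule that)
    define c where "c i = (if i < n1 then c1 i else c2 (i - n1))" for i
    define e where "e i = (if i < n1 then e1 i else e2 (i - n1))" for i
    have nsplit: "i < n \<Longrightarrow> \<not> i < n1 \<Longrightarrow> i - n1 < m2" for i unfolding m2_def by linarith
    have P1: "\<forall>i<n. \<forall>k. c i$k < e i$k"
      using I1(1) I2(1) nsplit unfolding c_def e_def by auto
    have P2: "\<forall>i<n. \<forall>k. a$k \<le> c i$k \<and> e i$k \<le> b$k"
    proof (intro allI impI)
      fix i k assume i: "i < n"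
      show "a$k \<le> c i$k \<and> e i$k \<le> b$k"
      proof (cases "i < n1")
        case True
        have "a$k \<le> c1 i$k \<and> e1 i$k \<le> upd b j t$k" using I1(2) True by blast
        moreover have "upd b j t $ k \<le> b$k" using sub1 by blast
        ultimately show ?thesis using True unfolding c_def e_def by auto
      next
        case False
        have "upd a j t$k \<le> c2 (i - n1)$k \<and> e2 (i - n1)$k \<le> b$k" using I2(2) nsplit[OF i False] by blast
        moreover have "a$k \<le> upd a j t $ k" using sub2 by blast
        ultimately show ?thesis using False unfolding c_def e_def by auto
      qed
    qed
    have P3: "(\<Union>i<n. cbox (c i) (e i)) = cbox a b"
    proof -
      have "(\<Union>i<n. cbox (c i) (e i)) = (\<Union>i<n1. cbox (c1 i) (e1 i)) \<union> (\<Union>i<m2. cbox (c2 i) (e2 i))"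
      proof (rule antisym)
        show "(\<Union>i<n. cbox (c i) (e i)) \<subseteq> (\<Union>i<n1. cbox (c1 i) (e1 i)) \<union> (\<Union>i<m2. cbox (c2 i) (e2 i))"
          using nsplit unfolding c_def e_def by (auto split: if_splits)
        show "(\<Union>i<n1. cbox (c1 i) (e1 i)) \<union> (\<Union>i<m2. cbox (c2 i) (e2 i)) \<subseteq> (\<Union>i<n. cbox (c i) (e i))"
        proof (intro Un_least UN_least)
          fix i assume "i \<in> {..<n1}"
          then show "cbox (c1 i) (e1 i) \<subseteq> (\<Union>i<n. cbox (c i) (e i))"
          proof -
            have "cbox (c i) (e i) \<subseteq> (\<Union>i<n. cbox (c i) (e i))" using \<open>i \<in> {..<n1}\<close> n1 by (intro UN_upper) auto
            moreover have "c i = c1 i" "e i = e1 i" using \<open>i \<in> {..<n1}\<close> unfolding c_def e_def by auto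
            ultimately show ?thesis by simp
          qed
        next
          fix i assume "i \<in> {..<m2}"
          then have "i + n1 < n" "\<not> i + n1 < n1" unfolding m2_def by auto
          then show "cbox (c2 i) (e2 i) \<subseteq> (\<Union>i<n. cbox (c i) (e i))"
          proof -
            have "cbox (c (i + n1)) (e (i + n1)) \<subseteq> (\<Union>i<n. cbox (c i) (e i))" using \<open>i + n1 < n\<close> by (intro UN_upper) auto
            moreover have "c (i + n1) = c2 i" "e (i + n1) = e2 i" unfolding c_def e_def by auto
            ultimately show ?thesis by simp
          qed
        qed
      qed
      also have "\<dots> = cbox a b" using I1(3) I2(3) cbox_split[OF t(1,2)] by simp
      finally show ?thesis .
    qed
    have intr1: "interior (cbox (c i) (e i)) \<subseteq> box a (upd b j t)" if "i < n1" for i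
    proof -
      have "\<forall>k. a$k \<le> c1 i$k \<and> e1 i$k \<le> upd b j t$k" using I1(2) that by blast
      from interior_sub_box[OF this] show ?thesis using that unfolding c_def e_def by simp
    qed
    have intr2: "interior (cbox (c i) (e i)) \<subseteq> box (upd a j t) b" if "i < n" "\<not> i < n1" for i
    proof -
      have "\<forall>k. upd a j t$k \<le> c2 (i - n1)$k \<and> e2 (i - n1)$k \<le> b$k" using I2(2) nsplit[OF that] by blast
      from interior_sub_box[OF this] show ?thesis using that unfolding c_def e_def by simp
    qed
    have bdisj: "box a (upd b j t) \<inter> box (upd a j t) b = {}"
    proof -
      have "x \<notin> box a (upd b j t) \<or> x \<notin> box (upd a j t) b" for x
        using spec[of "\<lambda>i. a$i < x$i \<and> x$i < upd b j t $ i" j] spec[of "\<lambda>i. upd a j t $ i < x$i \<and> x$i < b$i" j]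
        by (auto simp: mem_box_cart)
      then show ?thesis by blast
    qed
    have P4: "\<forall>i<n. \<forall>i'<n. i \<noteq> i' \<longrightarrow> interior (cbox (c i) (e i)) \<inter> interior (cbox (c i') (e i')) = {}"
    proof (intro allI impI)
      fix i i' assume ii: "i < n" "i' < n" "i \<noteq> i'"
      consider "i < n1" "i' < n1" | "i < n1" "\<not> i' < n1" | "\<not> i < n1" "i' < n1" | "\<not> i < n1" "\<not> i' < n1" by blast
      then show "interior (cbox (c i) (e i)) \<inter> interior (cbox (c i') (e i')) = {}"
      proof cases
        case 1 then show ?thesis using I1(4) ii unfolding c_def e_def by auto
      next
        case 2 then show ?thesis using intr1[of i] intr2[of i'] ii bdisj by blast
      next
        case 3 then show ?thesis using intr1[of i'] intr2[of i] ii bdisj by blast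
      next
        case 4
        then have "i - n1 < m2" "i' - n1 < m2" "i - n1 \<noteq> i' - n1" using nsplit ii by auto
        then show ?thesis using I2(4) 4 unfolding c_def e_def by auto
      qed
    qed
    have P5: "\<forall>i<n. measure ?M (cbox (c i) (e i)) = measure ?M (cbox a b) / real n"
    proof (intro allI impI)
      fix i assume i: "i < n"
      show "measure ?M (cbox (c i) (e i)) = measure ?M (cbox a b) / real n"
      proof (cases "i < n1")
        case True
        then have "measure ?M (cbox (c i) (e i)) = p * measure ?M (cbox a b) / real n1"
          using I1(5) t(3) unfolding c_def e_def by simp
        then show ?thesis using n1 unfolding p_def by simp
      next
        case False
        then have "measure ?M (cbox (c i) (e i)) = (1 - p) * measure ?M (cbox a b) / real m2"
          using I2(5) t(4) nsplit[OF i] unfolding c_def e_def by simp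
        then show ?thesis using m2 p(4) by simp
      qed
    qed
    have P6: "\<forall>i<n. \<forall>k. e i$k - c i$k = b$k - a$k \<or> \<delta>^2/3 * max_edge (c i) (e i) \<le> e i$k - c i$k"
    proof (intro allI impI)
      fix i k assume i: "i < n"
      have ME: "\<delta>^2/3 * max_edge (c i) (e i) \<le> \<delta>^2/3 * max_edge a b"
      proof -
        have "\<forall>k. a$k \<le> c i$k \<and> e i$k \<le> b$k" using P2 i by blast
        from max_edge_mono[OF this] show ?thesis using d2 by (simp add: mult_left_mono)
      qed
      show "e i$k - c i$k = b$k - a$k \<or> \<delta>^2/3 * max_edge (c i) (e i) \<le> e i$k - c i$k"
      proof (cases "i < n1")
        case True
        then have "e i$k - c i$k = upd b j t$k - a$k \<or> \<delta>^2/3 * max_edge (c i) (e i) \<le> e i$k - c i$k"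
          using I1(6) unfolding c_def e_def by simp
        then show ?thesis using ME al1 by (cases "k = j") auto
      next
        case False
        then have "e i$k - c i$k = b$k - upd a j t$k \<or> \<delta>^2/3 * max_edge (c i) (e i) \<le> e i$k - c i$k"
          using I2(6) nsplit[OF i] unfolding c_def e_def by simp
        then show ?thesis using ME al2 by (cases "k = j") auto
      qed
    qed
    show ?thesis using P1 P2 P3 P4 P5 P6 by blast
  qed
qed


theorem lemma2p6:
  fixes \<delta> :: real
  assumes "\<delta> > 0"
  shows "\<exists>C::real. C > 0 \<and>
    (\<forall>(a::real^'d) b (n::nat) (h::real^'d \<Rightarrow> real).
      (\<forall>k. a$k < b$k) \<longrightarrow> n \<ge> 1 \<longrightarrow>
      h \<in> borel_measurable lebesgue \<longrightarrow>
      (\<forall>x\<in>cbox a b. \<delta> \<le> h x \<and> h x \<le> 1/\<delta>) \<longrightarrow>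
      (\<exists>c e :: nat \<Rightarrow> real^'d.
         (\<forall>i<n. \<forall>k. c i $ k \<le> e i $ k) \<and>
         (\<forall>i<n. cbox (c i) (e i) \<subseteq> cbox a b) \<and>
         (\<Union>i<n. cbox (c i) (e i)) = cbox a b \<and>
         (\<forall>i<n. \<forall>j<n. i \<noteq> j \<longrightarrow> interior (cbox (c i) (e i)) \<inter> interior (cbox (c j) (e j)) = {}) \<and>
         (\<forall>i<n. measure (density lebesgue (\<lambda>x. ennreal (h x))) (cbox (c i) (e i))
                 = measure (density lebesgue (\<lambda>x. ennreal (h x))) (cbox a b) / real n) \<and>
         (\<forall>i<n. min_edge a b / (C * real n powr (1 / real CARD('d))) \<le> min_edge (c i) (e i) \<and>
                min_edge (c i) (e i) \<le> max_edge (c i) (e i) \<and>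
                max_edge (c i) (e i) \<le> C / real n powr (1 / real CARD('d)) * max_edge a b)))"
  proof -
  let ?C = "3/\<delta>^4"
  show ?thesis
  proof (rule exI[of _ ?C], intro conjI allI impI)
    show "0 < ?C" using assms by simp
    fix a b :: "real^'d" and n :: nat and h :: "real^'d \<Rightarrow> real"
    assume ab: "\<forall>k. a$k < b$k" and n: "1 \<le> n" and hm: "h \<in> borel_measurable lebesgue"
      and hb: "\<forall>x\<in>cbox a b. \<delta> \<le> h x \<and> h x \<le> 1/\<delta>"
    let ?M = "density lebesgue (\<lambda>x. ennreal (h x))"
    have d: "0 < \<delta>" by (rule assms)
    have "a \<in> cbox a b" using ab by (simp add: mem_box_cart less_imp_le)
    then have "\<delta> \<le> 1/\<delta>" using hb by fastforce
    then have "\<delta> * \<delta> \<le> 1" using d by (simp add: field_simps)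
    then have d1: "\<delta> \<le> 1" using d by (metis less_le_not_le mult_le_cancel_left1 not_le_imp_less order.trans)
    obtain c e where P:
      "\<forall>i<n. \<forall>k. c i$k < e i$k" "\<forall>i<n. \<forall>k. a$k \<le> c i$k \<and> e i$k \<le> b$k"
      "(\<Union>i<n. cbox (c i) (e i)) = cbox a b"
      "\<forall>i<n. \<forall>j<n. i \<noteq> j \<longrightarrow> interior (cbox (c i) (e i)) \<inter> interior (cbox (c j) (e j)) = {}"
      "\<forall>i<n. measure ?M (cbox (c i) (e i)) = measure ?M (cbox a b) / real n"
      "\<forall>i<n. \<forall>k. e i$k - c i$k = b$k - a$k \<or> \<delta>^2/3 * max_edge (c i) (e i) \<le> e i$k - c i$k"
      using partition_rec[OF d hm n ab hb] by (elim exE conjE) (rule that)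
    have bounds: "min_edge a b / (?C * real n powr (1 / real CARD('d))) \<le> min_edge (c i) (e i) \<and>
                min_edge (c i) (e i) \<le> max_edge (c i) (e i) \<and>
                max_edge (c i) (e i) \<le> ?C / real n powr (1 / real CARD('d)) * max_edge a b" if i: "i < n" for i
    proof -
      have ce: "\<forall>k. c i$k < e i$k" using P(1) i by blast
      have sub: "\<forall>k. a$k \<le> c i$k \<and> e i$k \<le> b$k" using P(2) i by blast
      have inv: "\<forall>k. e i$k - c i$k = b$k - a$k \<or> \<delta>^2/3 * max_edge (c i) (e i) \<le> e i$k - c i$k"
        using P(6) i by blast
      have mP: "measure ?M (cbox (c i) (e i)) = measure ?M (cbox a b) / real n" using P(5) i by blast
      have subs: "cbox (c i) (e i) \<subseteq> cbox a b" by (rule cbox_sub[OF sub])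
      have vP: "measure lebesgue (cbox (c i) (e i)) = (\<Prod>k\<in>UNIV. e i$k - c i$k)"
        using ce by (intro vol_cbox) (simp add: less_imp_le)
      have vB: "measure lebesgue (cbox a b) = (\<Prod>k\<in>UNIV. b$k - a$k)"
        using ab by (intro vol_cbox) (simp add: less_imp_le)
      define VP where "VP = (\<Prod>k\<in>UNIV. e i$k - c i$k)"
      define VB where "VB = (\<Prod>k\<in>UNIV. b$k - a$k)"
      define mu where "mu = measure ?M (cbox a b)"
      have P1: "\<delta> * VP \<le> mu / real n" using dens_bounds(2)[OF d hm hb cbox_sets subs] vP mP
        unfolding VP_def mu_def by simp
      have P2: "mu / real n \<le> VP / \<delta>" using dens_bounds(3)[OF d hm hb cbox_sets subs] vP mP
        unfolding VP_def mu_def by simp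
      have B1: "\<delta> * VB \<le> mu" using dens_bounds(2)[OF d hm hb cbox_sets order_refl] vB
        unfolding VB_def mu_def by simp
      have B2: "mu \<le> VB / \<delta>" using dens_bounds(3)[OF d hm hb cbox_sets order_refl] vB
        unfolding VB_def mu_def by simp
      have nr: "real n > 0" using n by simp
      have vol1: "\<delta>^2 * VB / n \<le> VP"
      proof -
        have "\<delta> * VB / n \<le> mu / n" using B1 nr by (intro divide_right_mono) auto
        also have "\<dots> \<le> VP / \<delta>" by (rule P2)
        finally have "\<delta> * VB / n \<le> VP / \<delta>" .
        then show ?thesis using d by (simp add: field_simps power2_eq_square)
      qed
      have vol2: "VP \<le> VB / (\<delta>^2 * n)"
      proof -
        have "\<delta> * VP \<le> mu / n" by (rule P1)
        also have "\<dots> \<le> (VB / \<delta>) / n" using B2 nr by (intro divide_right_mono) auto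
        finally have "\<delta> * VP \<le> (VB / \<delta>) / n" .
        then show ?thesis using d nr by (simp add: field_simps power2_eq_square)
      qed
      note fb = final_bounds[OF d d1 n ab ce sub vol1[unfolded VB_def VP_def] vol2[unfolded VB_def VP_def] inv]
      show ?thesis using fb min_le_max_edge by blast
    qed
    show "\<exists>c e :: nat \<Rightarrow> real^'d.
         (\<forall>i<n. \<forall>k. c i $ k \<le> e i $ k) \<and>
         (\<forall>i<n. cbox (c i) (e i) \<subseteq> cbox a b) \<and>
         (\<Union>i<n. cbox (c i) (e i)) = cbox a b \<and>
         (\<forall>i<n. \<forall>j<n. i \<noteq> j \<longrightarrow> interior (cbox (c i) (e i)) \<inter> interior (cbox (c j) (e j)) = {}) \<and>
         (\<forall>i<n. measure ?M (cbox (c i) (e i)) = measure ?M (cbox a b) / real n) \<and>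
         (\<forall>i<n. min_edge a b / (?C * real n powr (1 / real CARD('d))) \<le> min_edge (c i) (e i) \<and>
                min_edge (c i) (e i) \<le> max_edge (c i) (e i) \<and>
                max_edge (c i) (e i) \<le> ?C / real n powr (1 / real CARD('d)) * max_edge a b)"
    proof (rule exI[of _ c], rule exI[of _ e], intro conjI)
      show "\<forall>i<n. \<forall>k. c i $ k \<le> e i $ k" using P(1) by (simp add: less_imp_le)
      show "\<forall>i<n. cbox (c i) (e i) \<subseteq> cbox a b" using P(2) cbox_sub by blast
      show "(\<Union>i<n. cbox (c i) (e i)) = cbox a b" by (rule P(3))
      show "\<forall>i<n. \<forall>j<n. i \<noteq> j \<longrightarrow> interior (cbox (c i) (e i)) \<inter> interior (cbox (c j) (e j)) = {}" by (rule P(4))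
      show "\<forall>i<n. measure ?M (cbox (c i) (e i)) = measure ?M (cbox a b) / real n" by (rule P(5))
      show "\<forall>i<n. min_edge a b / (?C * real n powr (1 / real CARD('d))) \<le> min_edge (c i) (e i) \<and>
                min_edge (c i) (e i) \<le> max_edge (c i) (e i) \<and>
                max_edge (c i) (e i) \<le> ?C / real n powr (1 / real CARD('d)) * max_edge a b"
        using bounds by blast
    qed
  qed
qed

end
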